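(* Let $X$ be an infinite-dimensional separable (real or complex) Banach space and let $A$ be an operator in $X$ satisfying all hypotheses of Theorem 2.1: $A$ is densely defined, $A^r$ is closed for all $r\ge1$, and there are a dense set $X_0\subset\bigcap_n D(A^n)$ and $B:X_0\to X_0$ with $ABx=x$, and $\sum_{n\ge1}A^nx$, $\sum_{n\ge1}B^nx$ unconditionally convergent for all $x\in X_0$. Then for every scalar $\lambda$ with $|\lambda|=1$, the operator $\lambda A$ is frequently hypercyclic.
   Context: A series $\sum_k x_k$ converges unconditionally if for every $\varepsilon>0$ there is $N$ with $\|\sum_{k\in F}x_k\|<\varepsilon$ for every finite $F\subset\mathbb{N}$ disjoint from $\{1,\dots,N\}$. An operator $T$ is frequently hypercyclic if there is $f\in D(T)$ with $T^nf\in D(T)$ for all $n\ge1$ such that for every non-empty open $U\subset X$ the set $\{n: T^nf\in U\}$ has positive lower density, where the lower density of $E\subset\mathbb{N}$ is $\liminf_{N}\#(E\cap\{1,\dots,N\})/N$. *)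

theory Defs
  imports "HOL-Analysis.Analysis" "HOL-Library.Extended_Real"
begin

text \<open>A (real) Banach space of type 'a carries a scalar field K, which is either
  the reals or the complex numbers (embedded in complex), with a scalar
  multiplication smul extending the real one and a norm that is absolutely
  homogeneous for it.\<close>
definition scalar_structure :: "complex set \<Rightarrow> (complex \<Rightarrow> 'a::banach \<Rightarrow> 'a) \<Rightarrow> bool" where
  "scalar_structure K smul \<longleftrightarrow>
     (K = range complex_of_real \<or> K = UNIV) \<and>
     (\<forall>r x. smul (complex_of_real r) x = r *\<^sub>R x) \<and>
     (\<forall>a\<in>K. \<forall>b\<in>K. \<forall>x. smul (a * b) x = smul a (smul b x)) \<and>
     (\<forall>a\<in>K. \<forall>b\<in>K. \<forall>x. smul (a + b) x = smul a x + smul b x) \<and>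
     (\<forall>a\<in>K. \<forall>x y. smul a (x + y) = smul a x + smul a y) \<and>
     (\<forall>a\<in>K. \<forall>x. norm (smul a x) = cmod a * norm x)"

definition infinite_dim :: "complex set \<Rightarrow> (complex \<Rightarrow> 'a::banach \<Rightarrow> 'a) \<Rightarrow> bool" where
  "infinite_dim K smul \<longleftrightarrow>
     \<not> (\<exists>F. finite F \<and> (\<forall>x. \<exists>c. (\<forall>v\<in>F. c v \<in> K) \<and> x = (\<Sum>v\<in>F. smul (c v) v)))"

definition separable_space :: "'a::topological_space itself \<Rightarrow> bool" where
  "separable_space _ \<longleftrightarrow> (\<exists>C::'a set. countable C \<and> closure C = UNIV)"

text \<open>A (possibly unbounded) K-linear operator with domain D; the values of the
  HOL function A outside D are irrelevant.\<close>
definition linear_operator ::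
  "complex set \<Rightarrow> (complex \<Rightarrow> 'a::banach \<Rightarrow> 'a) \<Rightarrow> 'a set \<Rightarrow> ('a \<Rightarrow> 'a) \<Rightarrow> bool" where
  "linear_operator K smul D A \<longleftrightarrow>
     0 \<in> D \<and> (\<forall>x\<in>D. \<forall>y\<in>D. x + y \<in> D) \<and> (\<forall>c\<in>K. \<forall>x\<in>D. smul c x \<in> D) \<and>
     (\<forall>x\<in>D. \<forall>y\<in>D. A (x + y) = A x + A y) \<and>
     (\<forall>c\<in>K. \<forall>x\<in>D. A (smul c x) = smul c (A x))"

definition pow_dom :: "'a set \<Rightarrow> ('a \<Rightarrow> 'a) \<Rightarrow> nat \<Rightarrow> 'a set" where
  "pow_dom D A n = {x. \<forall>k<n. (A ^^ k) x \<in> D}"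

definition closed_pow :: "'a::banach set \<Rightarrow> ('a \<Rightarrow> 'a) \<Rightarrow> nat \<Rightarrow> bool" where
  "closed_pow D A n \<longleftrightarrow> closed {(x, (A ^^ n) x) | x. x \<in> pow_dom D A n}"

text \<open>Unconditional convergence of the series sum over k of x k , indices k >= 1 (as in the paper, where N = {1,2,...}).\<close>
definition uncond_conv :: "(nat \<Rightarrow> 'a::real_normed_vector) \<Rightarrow> bool" where
  "uncond_conv x \<longleftrightarrow>
     (\<forall>\<epsilon>>0. \<exists>N. \<forall>F. finite F \<and> F \<subseteq> {1..} \<and> F \<inter> {1..N} = {} \<longrightarrow> norm (\<Sum>k\<in>F. x k) < \<epsilon>)"

definition lower_density :: "nat set \<Rightarrow> ereal" where
  "lower_density E = Liminf sequentially (\<lambda>N. ereal (real (card (E \<inter> {1..N})) / real N))"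

definition freq_hypercyclic :: "'a::topological_space set \<Rightarrow> ('a \<Rightarrow> 'a) \<Rightarrow> bool" where
  "freq_hypercyclic D T \<longleftrightarrow>
     (\<exists>f. f \<in> D \<and> (\<forall>n\<ge>1. (T ^^ n) f \<in> D) \<and>
        (\<forall>U. open U \<and> U \<noteq> {} \<longrightarrow> lower_density {n. (T ^^ n) f \<in> U} > 0))"

end

theory Submission
  imports Defs
begin


lemma geo_eq: "a \<le> b \<Longrightarrow> (\<Sum>j\<in>{a..<b}. (1/2::real)^j) = 2 * (1/2)^a - 2 * (1/2)^b"
proof (induction b rule: dec_induct)
  case base then show ?case by simp
next
  case (step b) then show ?case by simp
qed

lemma geo_le: "(\<Sum>j\<in>{a..<b}. (1/2::real)^j) \<le> 2 * (1/2)^a"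
proof (cases "a \<le> b")
  case True then show ?thesis using geo_eq[OF True] by simp
next
  case False then show ?thesis by simp
qed

lemma geo_fin: "finite S \<Longrightarrow> (\<Sum>j\<in>S. (1/2::real)^j) \<le> 2"
proof -
  assume fS: "finite S"
  have "S \<subseteq> {0..<Suc (Max (insert 0 S))}" using fS by (auto simp: less_Suc_eq_le)
  hence "(\<Sum>j\<in>S. (1/2::real)^j) \<le> (\<Sum>j\<in>{0..<Suc (Max (insert 0 S))}. (1/2::real)^j)"
    by (intro sum_mono2) auto
  also have "\<dots> \<le> 2 * (1/2)^0" by (rule geo_le)
  also have "\<dots> = 2" by simp
  finally show ?thesis .
qed

lemma div_ge_real: "0 < M \<Longrightarrow> real N / real M - 1 \<le> real (N div M)"
proof -
  assume M: "0 < M"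
  have "N = N div M * M + N mod M" by simp
  hence "real N = real (N div M) * real M + real (N mod M)" by (metis of_nat_add of_nat_mult)
  moreover have "real (N mod M) < real M" using M by simp
  ultimately have "real N < (real (N div M) + 1) * real M" by (simp add: algebra_simps)
  thus ?thesis using M by (simp add: field_simps)
qed

lemma term_bound:
  fixes N Ml Mk Ll l :: nat
  assumes big: "2^(l+5) * (Ll+1)^2 * Mk \<le> Ml" and Mk: "0 < Mk"
  shows "real (((N + Ll) div Ml) * (2*Ll)) \<le> (real N + 2 * real Mk) / real Mk * (1/2)^(l+5)"
proof -
  have Ml: "0 < Ml" using big Mk by (metis less_le_trans mult_pos_pos pos2 zero_less_power
        add_gr_0 zero_less_one)
  have a: "(N+Ll)*(2*Ll) \<le> (N+2*Mk)*(Ll+1)^2"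
  proof -
    have "2*Ll \<le> (Ll+1)^2" by (simp add: power2_eq_square)
    hence x: "N*(2*Ll) \<le> N*(Ll+1)^2" by simp
    have "Ll*Ll \<le> (Ll+1)^2" by (simp add: power2_eq_square)
    also have "\<dots> \<le> Mk * (Ll+1)^2" using Mk by simp
    finally have y: "Ll*(2*Ll) \<le> 2*Mk*(Ll+1)^2" by simp
    show ?thesis using add_mono[OF x y] by (simp add: algebra_simps)
  qed
  have b: "(N+Ll)*(2*Ll)*Mk*2^(l+5) \<le> (N+2*Mk)*Ml"
  proof -
    have "(N+Ll)*(2*Ll)*Mk*2^(l+5) \<le> (N+2*Mk)*(Ll+1)^2*Mk*2^(l+5)"
      using a by (intro mult_right_mono) auto
    also have "\<dots> = (N+2*Mk)*(2^(l+5)*(Ll+1)^2*Mk)" by (simp add: algebra_simps)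
    also have "\<dots> \<le> (N+2*Mk)*Ml" using big by (intro mult_left_mono) auto
    finally show ?thesis .
  qed
  have "real (((N + Ll) div Ml) * (2*Ll)) \<le> real (N+Ll) / real Ml * real (2*Ll)"
    unfolding of_nat_mult by (intro mult_right_mono of_nat_div_le_of_nat) auto
  also have "\<dots> \<le> (real N + 2 * real Mk) / real Mk * (1/2)^(l+5)"
  proof -
    have bb: "real (N+Ll) * real (2*Ll) * real Mk * 2^(l+5) \<le> (real N + 2*real Mk) * real Ml"
      using b by (metis (mono_tags) of_nat_le_iff of_nat_mult of_nat_add of_nat_numeral of_nat_power)
    show ?thesis using Ml Mk bb by (simp add: field_simps power_one_over)
  qed
  finally show ?thesis .
qed

lemma dvd_sep: "(d::nat) dvd n \<Longrightarrow> d dvd m \<Longrightarrow> n < m \<Longrightarrow> n + d \<le> m"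
proof -
  assume "d dvd n" "d dvd m" "n < m"
  then obtain a b where ab: "n = d*a" "m = d*b" by (auto elim!: dvdE)
  with \<open>n < m\<close> have "a < b" by (metis mult_less_cancel1)
  hence "a + 1 \<le> b" by simp
  hence "d*(a+1) \<le> d*b" by (rule mult_left_mono) simp
  thus ?thesis using ab by (simp add: algebra_simps)
qed

lemma sep_sets:
  fixes L :: "nat \<Rightarrow> nat"
  assumes monoL: "mono L" and Lpos: "\<And>j. j < L j"
  shows "\<exists>E::nat \<Rightarrow> nat set.
    (\<forall>j n. n \<in> E j \<longrightarrow> L j \<le> n) \<and>
    (\<forall>j k n m. n \<in> E j \<longrightarrow> m \<in> E k \<longrightarrow> n < m \<longrightarrow> L j + n \<le> m \<and> L k + n \<le> m) \<and>
    (\<forall>j k n. n \<in> E j \<longrightarrow> n \<in> E k \<longrightarrow> j = k) \<and>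
    (\<forall>j. \<exists>c>0. \<forall>\<^sub>F N in sequentially. c * real N \<le> real (card (E j \<inter> {1..N})))"
proof -
  define M :: "nat \<Rightarrow> nat" where
    "M = rec_nat (L 0 + 1) (\<lambda>l Ml. 2^(l+6) * (L (Suc l) + 1)^2 * Ml + L (Suc l) + Suc l + 1)"
  have M0: "M 0 = L 0 + 1"
    and MS: "\<And>l. M (Suc l) = 2^(l+6) * (L (Suc l) + 1)^2 * M l + L (Suc l) + Suc l + 1"
    by (simp_all add: M_def)
  have Mbig: "L l + l + 1 \<le> M l" for l by (cases l) (simp_all add: M0 MS)
  have Mpos: "0 < M l" for l using Mbig[of l] by simp
  have Mstep: "M l \<le> M (Suc l)" for l
  proof -
    have "1 \<le> 2^(l+6) * (L (Suc l) + 1)^2" by (simp add: Suc_le_eq)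
    hence "1 * M l \<le> 2^(l+6) * (L (Suc l) + 1)^2 * M l" by (intro mult_right_mono) auto
    hence "M l \<le> 2^(l+6) * (L (Suc l) + 1)^2 * M l + L (Suc l) + Suc l + 1" by linarith
    thus ?thesis by (simp only: MS)
  qed
  have monoM: "mono M" unfolding mono_iff_le_Suc using Mstep by blast
  have Mgrow: "2^(l+5) * (L l + 1)^2 * M k \<le> M l" if kl: "k < l" for k l
  proof -
    obtain l' where l': "l = Suc l'" using kl by (cases l) auto
    have "k \<le> l'" using kl l' by simp
    hence "M k \<le> M l'" using monoM by (simp add: mono_def)
    hence "2^(l+5) * (L l + 1)^2 * M k \<le> 2^(l'+6) * (L (Suc l') + 1)^2 * M l'"
      using l' by (simp add: add.commute)
    also have "\<dots> \<le> M l" unfolding l' MS by simp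
    finally show ?thesis .
  qed
  have LM: "L l \<le> M l" for l using Mbig[of l] by simp
  define E where "E k = {n. L k \<le> n \<and> M k dvd n \<and>
      (\<forall>l>k. \<forall>p\<ge>1. L l + n \<le> p * M l \<or> L l + p * M l \<le> n)}" for k
  have Lge1: "1 \<le> L j" for j using Lpos[of j] by simp
  have mult_form: "\<exists>p\<ge>1. n = p * M k" if "n \<in> E k" for n k
  proof -
    from that have "M k dvd n" "L k \<le> n" by (auto simp: E_def)
    then obtain p where p: "n = M k * p" by (auto elim!: dvdE)
    have "p \<noteq> 0" using p \<open>L k \<le> n\<close> Lge1[of k] by (cases p) auto
    thus ?thesis using p by (intro exI[of _ p]) auto
  qed
  have P1: "\<forall>j n. n \<in> E j \<longrightarrow> L j \<le> n" by (auto simp: E_def)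
  have P2: "\<forall>j k n m. n \<in> E j \<longrightarrow> m \<in> E k \<longrightarrow> n < m \<longrightarrow> L j + n \<le> m \<and> L k + n \<le> m"
  proof (intro allI impI)
    fix j k n m assume n: "n \<in> E j" and m: "m \<in> E k" and nm: "n < m"
    consider "j = k" | "j < k" | "k < j" by linarith
    then show "L j + n \<le> m \<and> L k + n \<le> m"
    proof cases
      case 1
      have "n + M k \<le> m" using n m nm 1 by (intro dvd_sep) (auto simp: E_def)
      thus ?thesis using LM[of k] 1 by simp
    next
      case 2
      obtain p where p: "p \<ge> 1" "m = p * M k" using mult_form[OF m] by blast
      have "L k + n \<le> p * M k \<or> L k + p * M k \<le> n" using n 2 p(1) by (auto simp: E_def)
      hence "L k + n \<le> m" using p nm by auto
      moreover have "L j \<le> L k" using 2 monoL by (simp add: mono_def)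
      ultimately show ?thesis by simp
    next
      case 3
      obtain p where p: "p \<ge> 1" "n = p * M j" using mult_form[OF n] by blast
      have "L j + m \<le> p * M j \<or> L j + p * M j \<le> m" using m 3 p(1) by (auto simp: E_def)
      hence "L j + n \<le> m" using p nm by auto
      moreover have "L k \<le> L j" using 3 monoL by (simp add: mono_def)
      ultimately show ?thesis by simp
    qed
  qed
  have P3: "\<forall>j k n. n \<in> E j \<longrightarrow> n \<in> E k \<longrightarrow> j = k"
  proof (intro allI impI)
    fix j k n assume a: "n \<in> E j" "n \<in> E k"
    have False if jk: "j < k" and nj: "n \<in> E j" and nk: "n \<in> E k" for j k
    proof -
      obtain p where p: "p \<ge> 1" "n = p * M k" using mult_form[OF nk] by blast
      have "L k + n \<le> p * M k \<or> L k + p * M k \<le> n" using nj jk p(1) by (auto simp: E_def)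
      thus False using p Lge1[of k] by auto
    qed
    thus "j = k" using a by (metis linorder_neqE_nat)
  qed
  have P4: "\<exists>c>0. \<forall>\<^sub>F N in sequentially. c * real N \<le> real (card (E k \<inter> {1..N}))" for k
  proof -
    define Mk where "Mk = M k"
    have Mk: "0 < Mk" using Mpos by (simp add: Mk_def)
    have main: "real N / (2 * real Mk) \<le> real (card (E k \<inter> {1..N}))"
      if N: "3 * Mk * (L k + 2) \<le> N" for N
    proof -
      define Good where "Good = (\<lambda>q. q * Mk) ` {1..N div Mk}"
      define Bad where "Bad = (\<Union>l\<in>{k<..N}. \<Union>p\<in>{1..(N + L l) div M l}.
                                 {p * M l + 1 - L l ..< p * M l + L l})"
      have sub: "Good - {..<L k} - Bad \<subseteq> E k \<inter> {1..N}"
      proof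
        fix n assume n: "n \<in> Good - {..<L k} - Bad"
        then obtain q where q: "1 \<le> q" "q \<le> N div Mk" "n = q * Mk" by (auto simp: Good_def)
        have "q * Mk \<le> N div Mk * Mk" using q(2) by (rule mult_right_mono) simp
        also have "\<dots> \<le> N" by simp
        finally have nN: "n \<le> N" using q by simp
        have n1: "1 \<le> n" using q Mk by simp
        have nL: "L k \<le> n" using n by auto
        have dv: "M k dvd n" using q by (simp add: Mk_def)
        have far: "L l + n \<le> p * M l \<or> L l + p * M l \<le> n" if "k < l" "1 \<le> p" for l p
        proof (rule ccontr)
          assume nf: "\<not> ?thesis"
          hence a: "p * M l < L l + n" and b: "n < L l + p * M l" by auto
          have lN: "l \<le> N"
          proof (rule ccontr)
            assume "\<not> l \<le> N"
            hence "L l + N + 1 \<le> M l" using Mbig[of l] by simp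
            moreover have "M l \<le> p * M l" using that(2) by simp
            ultimately show False using a nN by simp
          qed
          have pN: "p \<le> (N + L l) div M l"
          proof -
            have "p * M l \<le> N + L l" using a nN by simp
            hence "p * M l div M l \<le> (N + L l) div M l" by (rule div_le_mono)
            thus ?thesis using Mpos[of l] by simp
          qed
          have nI: "n \<in> {p * M l + 1 - L l ..< p * M l + L l}" using a b by auto
          have "n \<in> Bad" unfolding Bad_def
            apply (rule UN_I[of l])
            using that lN apply simp
            apply (rule UN_I[of p])
            using that pN nI by auto
          thus False using n by simp
        qed
        show "n \<in> E k \<inter> {1..N}" using nN n1 nL dv far unfolding E_def by auto
      qed
      have finB: "finite Bad" unfolding Bad_def by auto
      have cardG: "card Good = N div Mk" unfolding Good_def
        using Mk by (subst card_image) (auto simp: inj_on_def)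
      have cardB: "card Bad \<le> (\<Sum>l\<in>{k<..N}. ((N + L l) div M l) * (2 * L l))"
      proof -
        have "card Bad \<le> (\<Sum>l\<in>{k<..N}. card (\<Union>p\<in>{1..(N + L l) div M l}.
                                 {p * M l + 1 - L l ..< p * M l + L l}))"
          unfolding Bad_def by (rule card_UN_le) simp
        also have "\<dots> \<le> (\<Sum>l\<in>{k<..N}. ((N + L l) div M l) * (2 * L l))"
        proof (rule sum_mono)
          fix l assume "l \<in> {k<..N}"
          have "card (\<Union>p\<in>{1..(N + L l) div M l}. {p * M l + 1 - L l ..< p * M l + L l})
                \<le> (\<Sum>p\<in>{1..(N + L l) div M l}. card {p * M l + 1 - L l ..< p * M l + L l})"
            by (rule card_UN_le) simp
          also have "\<dots> \<le> (\<Sum>p\<in>{1..(N + L l) div M l}. 2 * L l)"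
            by (intro sum_mono) simp
          also have "\<dots> = ((N + L l) div M l) * (2 * L l)" by simp
          finally show "card (\<Union>p\<in>{1..(N + L l) div M l}. {p * M l + 1 - L l ..< p * M l + L l})
                \<le> ((N + L l) div M l) * (2 * L l)" .
        qed
        finally show ?thesis .
      qed
      have "card Good \<le> card (Good - {..<L k} - Bad) + card {..<L k} + card Bad"
      proof -
        have "Good \<subseteq> (Good - {..<L k} - Bad) \<union> {..<L k} \<union> Bad" by auto
        hence "card Good \<le> card ((Good - {..<L k} - Bad) \<union> {..<L k} \<union> Bad)"
          using finB by (intro card_mono) (auto simp: Good_def)
        also have "\<dots> \<le> card (Good - {..<L k} - Bad) + card {..<L k} + card Bad"
          by (metis card_Un_le add_le_mono order_refl order_trans)
        finally show ?thesis .
      qed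
      moreover have "card (Good - {..<L k} - Bad) \<le> card (E k \<inter> {1..N})"
        using sub by (intro card_mono) auto
      ultimately have c1: "real (N div Mk) \<le> real (card (E k \<inter> {1..N})) + real (L k) + real (card Bad)"
        using cardG by simp
      have "real (card Bad) \<le> (\<Sum>l\<in>{k<..N}. real (((N + L l) div M l) * (2 * L l)))"
        using cardB by (metis of_nat_le_iff of_nat_sum)
      also have "\<dots> \<le> (\<Sum>l\<in>{k<..N}. (real N + 2 * real Mk) / real Mk * (1/2)^(l+5))"
        using Mgrow Mpos unfolding Mk_def by (intro sum_mono term_bound) auto
      also have "\<dots> = (real N + 2 * real Mk) / real Mk / 32 * (\<Sum>l\<in>{k<..N}. (1/2)^l)"
        unfolding sum_distrib_left by (intro sum.cong refl) (simp add: power_add field_simps)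
      also have "\<dots> \<le> (real N + 2 * real Mk) / real Mk / 32 * 2"
        using Mk by (intro mult_left_mono geo_fin) auto
      finally have c2: "real (card Bad) \<le> (real N + 2 * real Mk) / real Mk / 32 * 2" .
      have c3: "real N / real Mk - 1 \<le> real (N div Mk)" using div_ge_real[OF Mk] .
      have NN: "3 * real Mk * (real (L k) + 2) \<le> real N"
        using N by (metis (mono_tags) of_nat_le_iff of_nat_mult of_nat_add of_nat_numeral)
      have "real N / (2 * real Mk) \<le> real N / real Mk - 1 - real (L k) - (real N + 2 * real Mk) / real Mk / 32 * 2"
      proof -
        have e: "real N / real Mk - 1 - real (L k) - (real N + 2 * real Mk) / real Mk / 32 * 2 - real N / (2 * real Mk)
              = (7 * (real N / real Mk) - 18 - 16 * real (L k)) / 16"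
          using Mk by (simp add: field_simps)
        have q: "3 * (real (L k) + 2) \<le> real N / real Mk" using NN Mk by (simp add: field_simps)
        have r0: "0 \<le> (7 * (real N / real Mk) - 18 - 16 * real (L k)) / 16"
        proof -
          obtain q where qd: "q = real N / real Mk" by blast
          have "3 * (real (L k) + 2) \<le> q" using q qd by simp
          hence "0 \<le> (7 * q - 18 - 16 * real (L k)) / 16" by simp
          thus ?thesis using qd by simp
        qed
        have "0 \<le> real N / real Mk - 1 - real (L k) - (real N + 2 * real Mk) / real Mk / 32 * 2 - real N / (2 * real Mk)"
          by (subst e) (rule r0)
        thus ?thesis by (simp only: diff_ge_0_iff_ge)
      qed
      thus ?thesis using c1 c2 c3 by linarith
    qed
    show ?thesis
      apply (rule exI[of _ "1 / (2 * real Mk)"])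
      using Mk main by (auto simp: eventually_sequentially intro!: exI[of _ "3 * Mk * (L k + 2)"])
  qed
  show ?thesis using P1 P2 P3 P4 by blast
qed




lemma ss_real: "scalar_structure K smul \<Longrightarrow> smul (complex_of_real r) x = r *\<^sub>R x"
  by (simp add: scalar_structure_def)
lemma ss_Kreal: "scalar_structure K smul \<Longrightarrow> complex_of_real r \<in> K"
  by (auto simp: scalar_structure_def)
lemma ss_K1: "scalar_structure K smul \<Longrightarrow> 1 \<in> K"
  using ss_Kreal[of K smul 1] by simp
lemma ss_Kmult: "scalar_structure K smul \<Longrightarrow> a \<in> K \<Longrightarrow> b \<in> K \<Longrightarrow> a * b \<in> K"
  unfolding scalar_structure_def by (metis UNIV_I image_iff of_real_mult)
lemma ss_Kpow: "scalar_structure K smul \<Longrightarrow> a \<in> K \<Longrightarrow> a ^ n \<in> K"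
  by (induction n) (auto intro: ss_K1 ss_Kmult)
lemma ss_Kcnj: "scalar_structure K smul \<Longrightarrow> a \<in> K \<Longrightarrow> cnj a \<in> K"
  by (auto simp: scalar_structure_def)
lemma ss_mult: "scalar_structure K smul \<Longrightarrow> a \<in> K \<Longrightarrow> b \<in> K \<Longrightarrow> smul (a * b) x = smul a (smul b x)"
  by (simp add: scalar_structure_def)
lemma ss_addc: "scalar_structure K smul \<Longrightarrow> a \<in> K \<Longrightarrow> b \<in> K \<Longrightarrow> smul (a + b) x = smul a x + smul b x"
  by (simp add: scalar_structure_def)
lemma ss_add: "scalar_structure K smul \<Longrightarrow> a \<in> K \<Longrightarrow> smul a (x + y) = smul a x + smul a y"
  by (simp add: scalar_structure_def)
lemma ss_norm: "scalar_structure K smul \<Longrightarrow> a \<in> K \<Longrightarrow> norm (smul a x) = cmod a * norm x"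
  by (simp add: scalar_structure_def)
lemma ss_one: "scalar_structure K smul \<Longrightarrow> smul 1 x = x"
  using ss_real[of K smul 1 x] by simp
lemma ss_zero: "scalar_structure K smul \<Longrightarrow> a \<in> K \<Longrightarrow> smul a 0 = 0"
  using ss_norm[of K smul a 0] by simp
lemma ss_blin: "scalar_structure K smul \<Longrightarrow> a \<in> K \<Longrightarrow> bounded_linear (smul a)"
proof -
  assume s: "scalar_structure K smul" and a: "a \<in> K"
  show ?thesis
  proof (rule bounded_linear_intro[where K="cmod a"])
    show "smul a (x + y) = smul a x + smul a y" for x y using ss_add[OF s a] .
    show "smul a (r *\<^sub>R x) = r *\<^sub>R smul a x" for r x
    proof -
      have "smul a (r *\<^sub>R x) = smul a (smul (complex_of_real r) x)" using ss_real[OF s] by simp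
      also have "\<dots> = smul (a * complex_of_real r) x" using ss_mult[OF s a ss_Kreal[OF s]] by simp
      also have "\<dots> = smul (complex_of_real r * a) x" by (simp add: mult.commute)
      also have "\<dots> = smul (complex_of_real r) (smul a x)" using ss_mult[OF s ss_Kreal[OF s] a] by simp
      also have "\<dots> = r *\<^sub>R smul a x" using ss_real[OF s] by simp
      finally show ?thesis .
    qed
    show "norm (smul a x) \<le> norm x * cmod a" for x using ss_norm[OF s a] by (simp add: mult.commute)
  qed
qed
lemma ss_sum: "scalar_structure K smul \<Longrightarrow> a \<in> K \<Longrightarrow> smul a (sum f F) = (\<Sum>i\<in>F. smul a (f i))"
  by (induction F rule: infinite_finite_induct) (auto simp: ss_zero ss_add)


lemma conv_max:
  fixes u :: "nat \<Rightarrow> 'a::real_normed_vector"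
  assumes "finite F"
  shows "(\<forall>G\<subseteq>F. norm (v + sum u G) \<le> M) \<Longrightarrow> (\<forall>d\<in>F. 0 \<le> a d \<and> a d \<le> 1) \<Longrightarrow>
     norm (v + (\<Sum>d\<in>F. a d *\<^sub>R u d)) \<le> M"
  using assms
proof (induction F arbitrary: v rule: finite_induct)
  case empty then show ?case by auto
next
  case (insert x F)
  have h1: "norm (v + (\<Sum>d\<in>F. a d *\<^sub>R u d)) \<le> M"
    using insert by (intro insert.IH) auto
  have h2: "norm ((v + u x) + (\<Sum>d\<in>F. a d *\<^sub>R u d)) \<le> M"
  proof (rule insert.IH)
    show "\<forall>G\<subseteq>F. norm (v + u x + sum u G) \<le> M"
    proof (intro allI impI)
      fix G assume G: "G \<subseteq> F"
      have "x \<notin> G" using G insert by auto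
      hence eq: "v + u x + sum u G = v + sum u (insert x G)"
        using G insert finite_subset by (subst sum.insert) (auto simp: algebra_simps)
      have "insert x G \<subseteq> insert x F" using G by auto
      hence "norm (v + sum u (insert x G)) \<le> M" using insert.prems(1) by blast
      thus "norm (v + u x + sum u G) \<le> M" by (simp only: eq)
    qed
    show "\<forall>d\<in>F. 0 \<le> a d \<and> a d \<le> 1" using insert by auto
  qed
  have ax: "0 \<le> a x" "a x \<le> 1" using insert by auto
  have "v + (\<Sum>d\<in>insert x F. a d *\<^sub>R u d)
       = (1 - a x) *\<^sub>R (v + (\<Sum>d\<in>F. a d *\<^sub>R u d)) + a x *\<^sub>R ((v + u x) + (\<Sum>d\<in>F. a d *\<^sub>R u d))"
    using insert by (simp add: algebra_simps)
  also have "norm \<dots> \<le> (1 - a x) * M + a x * M"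
  proof -
    have "norm ((1 - a x) *\<^sub>R (v + (\<Sum>d\<in>F. a d *\<^sub>R u d))) \<le> (1 - a x) * M"
      using h1 ax by (simp add: mult_left_mono)
    moreover have "norm (a x *\<^sub>R ((v + u x) + (\<Sum>d\<in>F. a d *\<^sub>R u d))) \<le> a x * M"
      using h2 ax by (simp add: mult_left_mono)
    ultimately show ?thesis by (meson add_mono norm_triangle_le)
  qed
  also have "\<dots> = M" by (simp add: algebra_simps)
  finally show ?case .
qed

lemma real_mult_bound:
  fixes u :: "nat \<Rightarrow> 'a::real_normed_vector"
  assumes "finite F" "\<forall>G\<subseteq>F. norm (sum u G) \<le> M" "\<forall>d\<in>F. \<bar>a d\<bar> \<le> 1"
  shows "norm (\<Sum>d\<in>F. a d *\<^sub>R u d) \<le> 2 * M"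
proof -
  have p: "norm (0 + (\<Sum>d\<in>F. max (a d) 0 *\<^sub>R u d)) \<le> M"
    using assms by (intro conv_max) auto
  have m: "norm (0 + (\<Sum>d\<in>F. max (- a d) 0 *\<^sub>R u d)) \<le> M"
    using assms by (intro conv_max) auto
  have "(\<Sum>d\<in>F. a d *\<^sub>R u d) = (\<Sum>d\<in>F. max (a d) 0 *\<^sub>R u d) - (\<Sum>d\<in>F. max (- a d) 0 *\<^sub>R u d)"
    unfolding sum_subtractf[symmetric] by (intro sum.cong refl) (simp add: max_def algebra_simps)
  also have "norm \<dots> \<le> M + M" using p m by (simp add: norm_triangle_le_diff)
  finally show ?thesis by simp
qed

lemma uncond_tail:
  assumes "uncond_conv u" "0 < e"
  shows "\<exists>N. \<forall>F. finite F \<longrightarrow> (\<forall>d\<in>F. N < d) \<longrightarrow> norm (sum u F) < e"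
proof -
  obtain N where N: "\<forall>F. finite F \<and> F \<subseteq> {1..} \<and> F \<inter> {1..N} = {} \<longrightarrow> norm (sum u F) < e"
    using assms unfolding uncond_conv_def by blast
  show ?thesis
  proof (intro exI allI impI)
    fix F :: "nat set" assume "finite F" "\<forall>d\<in>F. N < d"
    thus "norm (sum u F) < e" using N by fastforce
  qed
qed

lemma smul_decomp:
  assumes s: "scalar_structure K smul" and c: "c \<in> K"
  shows "smul c x = Re c *\<^sub>R x + smul (\<i> * complex_of_real (Im c)) x"
proof -
  have iK: "\<i> * complex_of_real (Im c) \<in> K"
  proof (cases "K = UNIV")
    case True then show ?thesis by simp
  next
    case False
    hence "K = range complex_of_real" using s by (auto simp: scalar_structure_def)
    then obtain r where "c = complex_of_real r" using c by auto
    thus ?thesis using ss_Kreal[OF s, of 0] by simp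
  qed
  have "c = complex_of_real (Re c) + \<i> * complex_of_real (Im c)" by (simp add: complex_eq_iff)
  hence "smul c x = smul (complex_of_real (Re c)) x + smul (\<i> * complex_of_real (Im c)) x"
    using ss_addc[OF s ss_Kreal[OF s] iK] by metis
  thus ?thesis using ss_real[OF s] by simp
qed

lemma uncond_mult:
  fixes smul :: "complex \<Rightarrow> 'a::banach \<Rightarrow> 'a"
  assumes s: "scalar_structure K smul" and u: "uncond_conv u"
    and c: "\<And>d. c d \<in> K" "\<And>d. cmod (c d) \<le> 1"
  shows "uncond_conv (\<lambda>d. smul (c d) (u d))"
  unfolding uncond_conv_def
proof (intro allI impI)
  fix e :: real assume e: "0 < e"
  obtain N where N: "\<forall>F. finite F \<and> F \<subseteq> {1..} \<and> F \<inter> {1..N} = {} \<longrightarrow> norm (sum u F) < e/8"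
    using u e unfolding uncond_conv_def by (meson divide_pos_pos zero_less_numeral)
  show "\<exists>N. \<forall>F. finite F \<and> F \<subseteq> {1..} \<and> F \<inter> {1..N} = {} \<longrightarrow> norm (\<Sum>k\<in>F. smul (c k) (u k)) < e"
  proof (intro exI allI impI)
    fix F :: "nat set" assume F: "finite F \<and> F \<subseteq> {1..} \<and> F \<inter> {1..N} = {}"
    have G: "\<forall>G\<subseteq>F. norm (sum u G) \<le> e/8"
    proof (intro allI impI)
      fix G assume "G \<subseteq> F"
      hence "finite G \<and> G \<subseteq> {1..} \<and> G \<inter> {1..N} = {}" using F finite_subset by blast
      thus "norm (sum u G) \<le> e/8" using N by (meson less_imp_le)
    qed
    have bre: "norm (\<Sum>d\<in>F. Re (c d) *\<^sub>R u d) \<le> 2 * (e/8)"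
      using F G c by (intro real_mult_bound) (auto intro: order_trans[OF abs_Re_le_cmod])
    have bim: "norm (\<Sum>d\<in>F. smul (\<i> * complex_of_real (Im (c d))) (u d)) \<le> 2 * (e/8)"
    proof (cases "K = UNIV")
      case True
      have iK: "\<i> \<in> K" using True by simp
      have "(\<Sum>d\<in>F. smul (\<i> * complex_of_real (Im (c d))) (u d)) = (\<Sum>d\<in>F. smul \<i> (Im (c d) *\<^sub>R u d))"
        using ss_mult[OF s iK ss_Kreal[OF s]] ss_real[OF s] by simp
      also have "\<dots> = smul \<i> (\<Sum>d\<in>F. Im (c d) *\<^sub>R u d)"
        using ss_sum[OF s iK, of "\<lambda>d. Im (c d) *\<^sub>R u d" F] by simp
      finally have eq: "(\<Sum>d\<in>F. smul (\<i> * complex_of_real (Im (c d))) (u d)) = smul \<i> (\<Sum>d\<in>F. Im (c d) *\<^sub>R u d)" .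
      have "norm (\<Sum>d\<in>F. Im (c d) *\<^sub>R u d) \<le> 2 * (e/8)"
        using F G c by (intro real_mult_bound) (auto intro: order_trans[OF abs_Im_le_cmod])
      thus ?thesis unfolding eq using ss_norm[OF s iK] by simp
    next
      case False
      hence K: "K = range complex_of_real" using s by (auto simp: scalar_structure_def)
      have "Im (c d) = 0" for d using c(1)[of d] K by auto
      hence "(\<Sum>d\<in>F. smul (\<i> * complex_of_real (Im (c d))) (u d)) = 0" using ss_real[OF s, of 0] by simp
      thus ?thesis using e by simp
    qed
    have "(\<Sum>k\<in>F. smul (c k) (u k)) = (\<Sum>d\<in>F. Re (c d) *\<^sub>R u d) + (\<Sum>d\<in>F. smul (\<i> * complex_of_real (Im (c d))) (u d))"
      unfolding sum.distrib[symmetric] using smul_decomp[OF s c(1)] by simp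
    also have "norm \<dots> \<le> 2 * (e/8) + 2 * (e/8)" using bre bim by (meson add_mono norm_triangle_le)
    also have "\<dots> < e" using e by simp
    finally show "norm (\<Sum>k\<in>F. smul (c k) (u k)) < e" .
  qed
qed


lemma lo_A0: "linear_operator K smul D A \<Longrightarrow> A 0 = 0"
proof -
  assume op: "linear_operator K smul D A"
  have "A (0 + 0) = A 0 + A 0" using op unfolding linear_operator_def by blast
  thus ?thesis by (metis add.right_neutral add_left_cancel)
qed

lemma pow_dom_0[simp]: "pow_dom D A 0 = UNIV" by (simp add: pow_dom_def)
lemma pow_dom_Suc: "x \<in> pow_dom D A (Suc n) \<longleftrightarrow> x \<in> pow_dom D A n \<and> (A ^^ n) x \<in> D"
  by (auto simp: pow_dom_def less_Suc_eq)
lemma pow_dom_mono: "m \<le> n \<Longrightarrow> x \<in> pow_dom D A n \<Longrightarrow> x \<in> pow_dom D A m"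
  by (auto simp: pow_dom_def)

lemma pd_add:
  assumes op: "linear_operator K smul D A" and x: "x \<in> pow_dom D A n" and y: "y \<in> pow_dom D A n"
  shows "x + y \<in> pow_dom D A n" "(A ^^ n) (x + y) = (A ^^ n) x + (A ^^ n) y"
proof -
  have eq: "\<forall>k\<le>n. (A ^^ k) (x + y) = (A ^^ k) x + (A ^^ k) y"
  proof (intro allI impI)
    fix k assume "k \<le> n" thus "(A ^^ k) (x + y) = (A ^^ k) x + (A ^^ k) y"
    proof (induction k)
      case 0 then show ?case by simp
    next
      case (Suc k)
      have "(A ^^ k) x \<in> D" "(A ^^ k) y \<in> D" using x y Suc.prems by (auto simp: pow_dom_def)
      thus ?case using Suc op by (auto simp: linear_operator_def)
    qed
  qed
  show "(A ^^ n) (x + y) = (A ^^ n) x + (A ^^ n) y" using eq by simp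
  show "x + y \<in> pow_dom D A n" unfolding pow_dom_def
  proof (intro CollectI allI impI)
    fix k assume k: "k < n"
    have "(A ^^ k) x \<in> D" "(A ^^ k) y \<in> D" using x y k by (auto simp: pow_dom_def)
    thus "(A ^^ k) (x + y) \<in> D" using eq k op by (auto simp: linear_operator_def)
  qed
qed

lemma pd_smul:
  assumes op: "linear_operator K smul D A" and c: "c \<in> K" and x: "x \<in> pow_dom D A n"
  shows "smul c x \<in> pow_dom D A n" "(A ^^ n) (smul c x) = smul c ((A ^^ n) x)"
proof -
  have eq: "\<forall>k\<le>n. (A ^^ k) (smul c x) = smul c ((A ^^ k) x)"
  proof (intro allI impI)
    fix k assume "k \<le> n" thus "(A ^^ k) (smul c x) = smul c ((A ^^ k) x)"
    proof (induction k)
      case 0 then show ?case by simp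
    next
      case (Suc k)
      have "(A ^^ k) x \<in> D" using x Suc.prems by (auto simp: pow_dom_def)
      thus ?case using Suc op c by (auto simp: linear_operator_def)
    qed
  qed
  show "(A ^^ n) (smul c x) = smul c ((A ^^ n) x)" using eq by simp
  show "smul c x \<in> pow_dom D A n" unfolding pow_dom_def
  proof (intro CollectI allI impI)
    fix k assume k: "k < n"
    have "(A ^^ k) x \<in> D" using x k by (auto simp: pow_dom_def)
    thus "(A ^^ k) (smul c x) \<in> D" using eq k op c by (auto simp: linear_operator_def)
  qed
qed

lemma pd_zero:
  assumes op: "linear_operator K smul D A"
  shows "0 \<in> pow_dom D A n" "(A ^^ n) 0 = 0"
proof -
  have z: "(A ^^ k) 0 = 0" for k by (induction k) (auto simp: lo_A0[OF op])
  show "(A ^^ n) 0 = 0" by (rule z)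
  show "0 \<in> pow_dom D A n" using z op by (auto simp: pow_dom_def linear_operator_def)
qed

lemma pd_sum:
  assumes op: "linear_operator K smul D A" and F: "finite F" and f: "\<forall>i\<in>F. f i \<in> pow_dom D A n"
  shows "sum f F \<in> pow_dom D A n \<and> (A ^^ n) (sum f F) = (\<Sum>i\<in>F. (A ^^ n) (f i))"
  using F f
proof (induction F rule: finite_induct)
  case empty then show ?case using pd_zero[OF op] by simp
next
  case (insert a F)
  then show ?case using pd_add[OF op, of "f a" n "sum f F"] by simp
qed

lemma Tpow:
  assumes s: "scalar_structure K smul" and op: "linear_operator K smul D A" and lam: "lam \<in> K"
  shows "x \<in> pow_dom D A n \<Longrightarrow> ((\<lambda>x. smul lam (A x)) ^^ n) x = smul (lam ^ n) ((A ^^ n) x)"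
proof (induction n)
  case 0 then show ?case using ss_one[OF s] by simp
next
  case (Suc n)
  have xn: "x \<in> pow_dom D A n" using Suc.prems by (simp add: pow_dom_Suc)
  have Ax: "(A ^^ n) x \<in> D" using Suc.prems by (simp add: pow_dom_Suc)
  have "((\<lambda>x. smul lam (A x)) ^^ Suc n) x = smul lam (A (smul (lam ^ n) ((A ^^ n) x)))"
    using Suc.IH[OF xn] by simp
  also have "\<dots> = smul lam (smul (lam ^ n) (A ((A ^^ n) x)))"
    using op Ax ss_Kpow[OF s lam] by (simp add: linear_operator_def)
  also have "\<dots> = smul (lam ^ Suc n) ((A ^^ Suc n) x)"
    using ss_mult[OF s lam ss_Kpow[OF s lam]] by simp
  finally show ?case .
qed

lemma AB_pow:
  assumes B_maps: "B ` X0 \<subseteq> X0" and AB: "\<forall>x\<in>X0. A (B x) = x" and y: "y \<in> X0"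
  shows "(B ^^ n) y \<in> X0" "m \<le> n \<Longrightarrow> (A ^^ m) ((B ^^ n) y) = (B ^^ (n - m)) y"
    "n \<le> m \<Longrightarrow> (A ^^ m) ((B ^^ n) y) = (A ^^ (m - n)) y"
proof -
  have inX: "(B ^^ k) y \<in> X0" for k by (induction k) (use y B_maps in auto)
  show "(B ^^ n) y \<in> X0" by (rule inX)
  have le: "m \<le> n \<Longrightarrow> (A ^^ m) ((B ^^ n) y) = (B ^^ (n - m)) y" for m n
  proof (induction m)
    case 0 then show ?case by simp
  next
    case (Suc m)
    have "n - m = Suc (n - Suc m)" using Suc.prems by simp
    hence "(A ^^ Suc m) ((B ^^ n) y) = A (B ((B ^^ (n - Suc m)) y))" using Suc by simp
    thus ?case using AB inX by simp
  qed
  show "m \<le> n \<Longrightarrow> (A ^^ m) ((B ^^ n) y) = (B ^^ (n - m)) y" by (rule le)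
  show "n \<le> m \<Longrightarrow> (A ^^ m) ((B ^^ n) y) = (A ^^ (m - n)) y"
  proof -
    assume nm: "n \<le> m"
    have "(A ^^ m) = (A ^^ (m - n)) \<circ> (A ^^ n)" using nm by (metis funpow_add le_add_diff_inverse2)
    thus ?thesis using le[of n n] by simp
  qed
qed



lemma lower_density_pos:
  assumes c: "0 < c" and ev: "\<forall>\<^sub>F N in sequentially. c * real N \<le> real (card (S \<inter> {1..N}))"
  shows "lower_density S > 0"
proof -
  have "\<forall>\<^sub>F N in sequentially. ereal c \<le> ereal (real (card (S \<inter> {1..N})) / real N)"
    using ev eventually_gt_at_top[of "0::nat"]
    by eventually_elim (simp add: pos_le_divide_eq)
  hence "ereal c \<le> lower_density S" unfolding lower_density_def by (rule Liminf_bounded)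
  thus ?thesis using c by (metis ereal_less(2) order_less_le_trans)
qed

lemma bnd_gen:
  assumes c: "0 \<le> c"
  shows "(\<Sum>j<b. if j < J then c else 2 * (1/2::real)^j) \<le> real J * c + 4 * (1/2)^J"
proof -
  let ?f = "\<lambda>j. if j < J then c else 2 * (1/2::real)^j"
  have eq: "{..<b} = ({..<b} \<inter> {..<J}) \<union> {J..<b}" by auto
  have "sum ?f {..<b} = sum ?f ({..<b} \<inter> {..<J}) + sum ?f {J..<b}"
    by (subst eq, rule sum.union_disjoint) auto
  also have "sum ?f ({..<b} \<inter> {..<J}) = real (card ({..<b} \<inter> {..<J})) * c"
    by (subst sum.cong[OF refl, of _ _ "\<lambda>_. c"]) auto
  also have "\<dots> \<le> real J * c"
  proof -
    have "card ({..<b} \<inter> {..<J}) \<le> card {..<J}" by (intro card_mono) auto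
    thus ?thesis using c by (intro mult_right_mono) auto
  qed
  also have "sum ?f {J..<b} = 2 * (\<Sum>j\<in>{J..<b}. (1/2::real)^j)"
    unfolding sum_distrib_left by (intro sum.cong) auto
  also have "\<dots> \<le> 2 * (2 * (1/2)^J)" using geo_le[of J b] by simp
  finally show ?thesis by simp
qed

lemma rel:
  assumes s: "scalar_structure K smul" and op: "linear_operator K smul D A"
    and X0_sub: "X0 \<subseteq> (\<Inter>n. pow_dom D A n)" and B_maps: "B ` X0 \<subseteq> X0"
    and AB: "\<forall>x\<in>X0. A (B x) = x" and y: "y \<in> X0"
    and lam: "lam \<in> K" and mu: "mu \<in> K" and lm: "lam * mu = 1"
  shows "smul (lam^m) ((A^^m) (smul (mu^n) ((B^^n) y))) =
     (if n < m then smul (lam^(m-n)) ((A^^(m-n)) y) else if n = m then y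
      else smul (mu^(n-m)) ((B^^(n-m)) y))"
proof -
  have Bn: "(B^^n) y \<in> X0" using AB_pow(1)[OF B_maps AB y] .
  hence dom: "(B^^n) y \<in> pow_dom D A m" using X0_sub by blast
  have "smul (lam^m) ((A^^m) (smul (mu^n) ((B^^n) y))) = smul (lam^m) (smul (mu^n) ((A^^m) ((B^^n) y)))"
    using pd_smul(2)[OF op ss_Kpow[OF s mu] dom] by simp
  also have "\<dots> = smul (lam^m * mu^n) ((A^^m) ((B^^n) y))"
    using ss_mult[OF s ss_Kpow[OF s lam] ss_Kpow[OF s mu]] by simp
  finally have L: "smul (lam^m) ((A^^m) (smul (mu^n) ((B^^n) y))) = smul (lam^m * mu^n) ((A^^m) ((B^^n) y))" .
  consider "n < m" | "n = m" | "m < n" by linarith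
  then show ?thesis
  proof cases
    case 1
    have "lam^m = lam^(m-n) * lam^n" using 1 by (metis le_add_diff_inverse2 less_imp_le power_add)
    hence "lam^m * mu^n = lam^(m-n) * (lam * mu)^n" by (simp add: power_mult_distrib mult.assoc)
    hence c: "lam^m * mu^n = lam^(m-n)" using lm by simp
    show ?thesis using L c AB_pow(3)[OF B_maps AB y, of n m] 1 by simp
  next
    case 2
    have c: "lam^m * mu^n = 1" using 2 lm by (simp add: power_mult_distrib[symmetric])
    show ?thesis using L c AB_pow(3)[OF B_maps AB y, of n m] 2 ss_one[OF s] by simp
  next
    case 3
    have "mu^n = mu^(n-m) * mu^m" using 3 by (metis le_add_diff_inverse2 less_imp_le power_add)
    hence "lam^m * mu^n = mu^(n-m) * (lam * mu)^m" by (simp add: power_mult_distrib mult.assoc mult.left_commute)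
    hence c: "lam^m * mu^n = mu^(n-m)" using lm by simp
    show ?thesis using L c AB_pow(2)[OF B_maps AB y, of m n] 3 by simp
  qed
qed

theorem corollary2p5:
  fixes K :: "complex set" and smul :: "complex \<Rightarrow> 'a::banach \<Rightarrow> 'a"
    and D :: "'a set" and A :: "'a \<Rightarrow> 'a"
    and X0 :: "'a set" and B :: "'a \<Rightarrow> 'a" and lam :: complex
  assumes scal: "scalar_structure K smul"
    and infdim: "infinite_dim K smul"
    and sep: "separable_space TYPE('a)"
    and op: "linear_operator K smul D A"
    and dense_dom: "closure D = UNIV"
    and closed_powers: "\<forall>r\<ge>1. closed_pow D A r"
    and X0_sub: "X0 \<subseteq> (\<Inter>n. pow_dom D A n)"
    and X0_dense: "closure X0 = UNIV"
    and B_maps: "B ` X0 \<subseteq> X0"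
    and AB: "\<forall>x\<in>X0. A (B x) = x"
    and sumA: "\<forall>x\<in>X0. uncond_conv (\<lambda>n. (A ^^ n) x)"
    and sumB: "\<forall>x\<in>X0. uncond_conv (\<lambda>n. (B ^^ n) x)"
    and lam: "lam \<in> K" "cmod lam = 1"
  shows "freq_hypercyclic D (\<lambda>x. smul lam (A x))"
proof -
  note s = scal
  define mu where "mu = cnj lam"
  have muK: "mu \<in> K" unfolding mu_def using ss_Kcnj[OF s lam(1)] .
  have lammu: "lam * mu = 1" unfolding mu_def using complex_norm_square[of lam] lam(2) by simp
  have mu1: "cmod mu = 1" unfolding mu_def using lam(2) by simp
  have lamp: "lam^n \<in> K" for n using ss_Kpow[OF s lam(1)] .
  have mup: "mu^n \<in> K" for n using ss_Kpow[OF s muK] .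
  have lamp1: "cmod (lam^n) = 1" for n using lam(2) by (simp add: norm_power)
  have mup1: "cmod (mu^n) = 1" for n using mu1 by (simp add: norm_power)
  define phA where "phA y d = smul (lam ^ d) ((A ^^ d) y)" for y d
  define phB where "phB y d = smul (mu ^ d) ((B ^^ d) y)" for y d
  have tails: "\<exists>R. \<forall>F. finite F \<longrightarrow> (\<forall>d\<in>F. R < d) \<longrightarrow>
      norm (sum (phA y) F) < e \<and> norm (sum (phB y) F) < e" if y: "y \<in> X0" and e: "0 < e" for y e
  proof -
    have uA: "uncond_conv (phA y)" unfolding phA_def
      using uncond_mult[OF s, of "\<lambda>d. (A^^d) y" "\<lambda>d. lam^d"] sumA y lamp lamp1 by auto
    have uB: "uncond_conv (phB y)" unfolding phB_def
      using uncond_mult[OF s, of "\<lambda>d. (B^^d) y" "\<lambda>d. mu^d"] sumB y mup mup1 by auto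
    obtain R1 where R1: "\<forall>F. finite F \<longrightarrow> (\<forall>d\<in>F. R1 < d) \<longrightarrow> norm (sum (phA y) F) < e"
      using uncond_tail[OF uA e] by blast
    obtain R2 where R2: "\<forall>F. finite F \<longrightarrow> (\<forall>d\<in>F. R2 < d) \<longrightarrow> norm (sum (phB y) F) < e"
      using uncond_tail[OF uB e] by blast
    show ?thesis by (rule exI[of _ "max R1 R2"]) (use R1 R2 in auto)
  qed
  obtain C :: "'a set" where C: "countable C" "closure C = UNIV"
    using sep unfolding separable_space_def by blast
  have Cne: "C \<noteq> {}" using C(2) by auto
  define cc where "cc = from_nat_into C"
  have ccC: "range cc = C" using Cne C(1) by (simp add: cc_def)
  have "\<forall>i q. \<exists>z\<in>X0. dist z (cc i) < inverse (real (Suc q))"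
  proof (intro allI)
    fix i q
    have "cc i \<in> closure X0" using X0_dense by simp
    thus "\<exists>z\<in>X0. dist z (cc i) < inverse (real (Suc q))"
      unfolding closure_approachable by simp
  qed
  then obtain yy where yy: "\<And>i q. yy i q \<in> X0 \<and> dist (yy i q) (cc i) < inverse (real (Suc q))"
    by metis
  define Y where "Y k = (case prod_decode (fst (prod_decode k)) of (i, q) \<Rightarrow> yy i q)" for k
  have YX0: "Y k \<in> X0" for k using yy by (simp add: Y_def split: prod.splits)
  have Yd: "\<exists>k\<ge>K0. dist (Y k) u < e" if e: "0 < e" for u e K0
  proof -
    have "u \<in> closure C" using C(2) by simp
    then obtain c' where c': "c' \<in> C" "dist c' u < e/2"
      using e unfolding closure_approachable by (meson half_gt_zero)
    then obtain i where i: "cc i = c'" using ccC by blast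
    obtain q where q: "inverse (real (Suc q)) < e/2" using reals_Archimedean[of "e/2"] e by auto
    define k where "k = prod_encode (prod_encode (i, q), K0)"
    have Yk: "Y k = yy i q" by (simp add: Y_def k_def)
    have "K0 \<le> k" unfolding k_def by (rule le_prod_encode_2)
    moreover have "dist (Y k) u < e"
    proof -
      have "dist (Y k) u \<le> dist (yy i q) (cc i) + dist (cc i) u" unfolding Yk by (rule dist_triangle)
      also have "\<dots> < e/2 + e/2" using yy[of i q] q c' i by (intro add_strict_mono) auto
      finally show ?thesis by simp
    qed
    ultimately show ?thesis by blast
  qed
  have "\<forall>i j. \<exists>R. \<forall>F. finite F \<longrightarrow> (\<forall>d\<in>F. R < d) \<longrightarrow>
      norm (sum (phA (Y i)) F) < (1/2)^j \<and> norm (sum (phB (Y i)) F) < (1/2)^j"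
    by (intro allI tails YX0) simp
  then obtain Rf where Rf: "\<And>i j F. finite F \<Longrightarrow> (\<forall>d\<in>F. Rf i j < d) \<Longrightarrow>
      norm (sum (phA (Y i)) F) < (1/2)^j \<and> norm (sum (phB (Y i)) F) < (1/2)^j"
    by metis
  define L where "L j = (\<Sum>i\<le>j. \<Sum>i'\<le>i. Rf i' i) + j + 1" for j
  have monoL: "mono L" unfolding mono_def L_def
    by (auto intro!: add_mono sum_mono2)
  have Lpos: "\<And>j. j < L j" by (simp add: L_def)
  have LRf: "Rf i j + j + 1 \<le> L j" if "i \<le> j" for i j
  proof -
    have "Rf i j \<le> (\<Sum>i'\<le>j. Rf i' j)" using that by (intro member_le_sum) auto
    also have "\<dots> \<le> (\<Sum>i\<le>j. \<Sum>i'\<le>i. Rf i' i)"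
      by (rule member_le_sum[where f="\<lambda>i. \<Sum>i'\<le>i. Rf i' i"]) auto
    finally show ?thesis by (simp add: L_def)
  qed
  from sep_sets[OF monoL Lpos] obtain E :: "nat \<Rightarrow> nat set" where E:
    "(\<forall>j n. n \<in> E j \<longrightarrow> L j \<le> n) \<and>
    (\<forall>j k n m. n \<in> E j \<longrightarrow> m \<in> E k \<longrightarrow> n < m \<longrightarrow> L j + n \<le> m \<and> L k + n \<le> m) \<and>
    (\<forall>j k n. n \<in> E j \<longrightarrow> n \<in> E k \<longrightarrow> j = k) \<and>
    (\<forall>j. \<exists>c>0. \<forall>\<^sub>F N in sequentially. c * real N \<le> real (card (E j \<inter> {1..N})))"
    by (elim exE)
  have E1: "\<And>j n. n \<in> E j \<Longrightarrow> L j \<le> n" using E by blast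
  have E2: "\<And>j k n m. n \<in> E j \<Longrightarrow> m \<in> E k \<Longrightarrow> n < m \<Longrightarrow> L j + n \<le> m \<and> L k + n \<le> m"
    using E by blast
  have E3: "\<And>j k n. n \<in> E j \<Longrightarrow> n \<in> E k \<Longrightarrow> j = k" using E by blast
  have E4: "\<And>j. \<exists>c>0. \<forall>\<^sub>F N in sequentially. c * real N \<le> real (card (E j \<inter> {1..N}))"
    using E by blast
  define w where "w n = (if \<exists>j. n \<in> E j then phB (Y (THE j. n \<in> E j)) n else 0)" for n
  have wE: "w n = phB (Y j) n" if "n \<in> E j" for n j
  proof -
    have "(THE j. n \<in> E j) = j" using that E3 by blast
    thus ?thesis using that by (auto simp: w_def)
  qed
  have wN: "w n = 0" if "\<forall>j. n \<notin> E j" for n using that by (simp add: w_def)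
  have X0dom: "v \<in> pow_dom D A m" if "v \<in> X0" for v m using X0_sub that by blast
  have wdom: "w n \<in> pow_dom D A m" for n m
  proof (cases "\<exists>j. n \<in> E j")
    case True
    then obtain j where j: "n \<in> E j" by blast
    show ?thesis unfolding wE[OF j] phB_def
      by (rule pd_smul(1)[OF op mup X0dom[OF AB_pow(1)[OF B_maps AB YX0]]])
  next
    case False
    thus ?thesis using wN pd_zero[OF op] by auto
  qed
  define s where "s m n = smul (lam ^ m) ((A ^^ m) (w n))" for m n
  have sE: "s m n = (if n < m then phA (Y j) (m - n) else if n = m then Y j else phB (Y j) (n - m))"
    if "n \<in> E j" for m n j
    unfolding s_def wE[OF that] phB_def phA_def
    by (rule rel[OF s op X0_sub B_maps AB YX0 lam(1) muK lammu])
  have sN: "s m n = 0" if "\<forall>j. n \<notin> E j" for m n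
    unfolding s_def wN[OF that] using pd_zero(2)[OF op] ss_zero[OF s lamp] by simp
  have part: "sum (s m) F = (\<Sum>j<b. sum (s m) (F \<inter> E j))" if F: "F \<subseteq> {..<b}" for m F b
  proof -
    have fin: "finite F" using F finite_subset by blast
    have "(\<Sum>j<b. sum (s m) (F \<inter> E j)) = sum (s m) (\<Union>j<b. F \<inter> E j)"
      by (rule sum.UNION_disjoint[symmetric]) (use fin E3 in auto)
    also have "\<dots> = sum (s m) F"
    proof (rule sum.mono_neutral_left)
      show "finite F" by (rule fin)
      show "(\<Union>j<b. F \<inter> E j) \<subseteq> F" by auto
      show "\<forall>i\<in>F - (\<Union>j<b. F \<inter> E j). s m i = 0"
      proof
        fix n assume n: "n \<in> F - (\<Union>j<b. F \<inter> E j)"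
        have "\<forall>j. n \<notin> E j"
        proof (intro allI notI)
          fix j assume "n \<in> E j"
          moreover have "j < b" using E1[OF \<open>n \<in> E j\<close>] Lpos[of j] n F by auto
          ultimately show False using n by auto
        qed
        thus "s m n = 0" by (rule sN)
      qed
    qed
    finally show ?thesis by simp
  qed
  have block: "norm (sum (s m) (F \<inter> E j)) \<le>
      norm (sum (phA (Y j)) ((\<lambda>n. m - n) ` (F \<inter> E j \<inter> {..<m}))) +
      norm (sum (phB (Y j)) ((\<lambda>n. n - m) ` (F \<inter> E j \<inter> {m<..})))"
    if fin: "finite F" and mF: "m \<notin> F" for F m j
  proof -
    have split: "F \<inter> E j = (F \<inter> E j \<inter> {..<m}) \<union> (F \<inter> E j \<inter> {m<..})"
      using mF by auto (metis linorder_neqE_nat)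
    have "sum (s m) (F \<inter> E j) = sum (s m) (F \<inter> E j \<inter> {..<m}) + sum (s m) (F \<inter> E j \<inter> {m<..})"
      by (subst split, rule sum.union_disjoint) (use fin in auto)
    also have "sum (s m) (F \<inter> E j \<inter> {..<m}) = sum (phA (Y j)) ((\<lambda>n. m - n) ` (F \<inter> E j \<inter> {..<m}))"
      by (subst sum.reindex) (auto simp: inj_on_def sE intro!: sum.cong)
    also have "sum (s m) (F \<inter> E j \<inter> {m<..}) = sum (phB (Y j)) ((\<lambda>n. n - m) ` (F \<inter> E j \<inter> {m<..}))"
      by (subst sum.reindex) (auto simp: inj_on_def sE intro!: sum.cong)
    finally show ?thesis by (metis norm_triangle_ineq)
  qed
  have normeq: "norm (sum (\<lambda>n. (A ^^ m) (w n)) F) = norm (sum (s m) F)" for m F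
  proof -
    have "sum (s m) F = smul (lam^m) (sum (\<lambda>n. (A ^^ m) (w n)) F)"
      using ss_sum[OF s lamp, of m "\<lambda>n. (A^^m) (w n)" F] by (simp add: s_def)
    thus ?thesis using ss_norm[OF s lamp] lamp1 by simp
  qed
  have errbound: "norm (sum (s m) F) \<le> (2 * real k + 4) * (1/2)^k"
    if mk: "m \<in> E k" and F: "F \<subseteq> {..<b}" and mF: "m \<notin> F" for m k F b
  proof -
    have fin: "finite F" using F finite_subset by blast
    have bj: "norm (sum (s m) (F \<inter> E j)) \<le> (if j < k then 2 * (1/2)^k else 2 * (1/2)^j)" for j
    proof -
      define DA where "DA = (\<lambda>n. m - n) ` (F \<inter> E j \<inter> {..<m})"
      define DB where "DB = (\<lambda>n. n - m) ` (F \<inter> E j \<inter> {m<..})"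
      have DAb: "\<forall>d\<in>DA. L j \<le> d \<and> L k \<le> d"
      proof
        fix d assume "d \<in> DA"
        then obtain n where n: "n \<in> E j" "n < m" "d = m - n" unfolding DA_def by auto
        show "L j \<le> d \<and> L k \<le> d" using E2[OF n(1) mk n(2)] n(3) by auto
      qed
      have DBb: "\<forall>d\<in>DB. L j \<le> d \<and> L k \<le> d"
      proof
        fix d assume "d \<in> DB"
        then obtain n where n: "n \<in> E j" "m < n" "d = n - m" unfolding DB_def by auto
        show "L j \<le> d \<and> L k \<le> d" using E2[OF mk n(1) n(2)] n(3) by auto
      qed
      have finA: "finite DA" "finite DB" using fin by (auto simp: DA_def DB_def)
      have bA: "norm (sum (phA (Y j)) DA) < (if j < k then (1/2)^k else (1/2)^j)"
       and bB: "norm (sum (phB (Y j)) DB) < (if j < k then (1/2)^k else (1/2)^j)"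
      proof -
        have "norm (sum (phA (Y j)) DA) < (if j < k then (1/2)^k else (1/2)^j) \<and>
              norm (sum (phB (Y j)) DB) < (if j < k then (1/2)^k else (1/2)^j)"
        proof (cases "j < k")
          case True
          have r: "Rf j k + k + 1 \<le> L k" using LRf True by simp
          have "\<forall>d\<in>DA. Rf j k < d" "\<forall>d\<in>DB. Rf j k < d" using DAb DBb r by fastforce+
          thus ?thesis using Rf[OF finA(1)] Rf[OF finA(2)] True by auto
        next
          case False
          have r: "Rf j j + j + 1 \<le> L j" using LRf by simp
          have "\<forall>d\<in>DA. Rf j j < d" "\<forall>d\<in>DB. Rf j j < d" using DAb DBb r by fastforce+
          thus ?thesis using Rf[OF finA(1)] Rf[OF finA(2)] False by auto
        qed
        thus "norm (sum (phA (Y j)) DA) < (if j < k then (1/2)^k else (1/2)^j)"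
             "norm (sum (phB (Y j)) DB) < (if j < k then (1/2)^k else (1/2)^j)" by auto
      qed
      have "norm (sum (s m) (F \<inter> E j)) \<le> norm (sum (phA (Y j)) DA) + norm (sum (phB (Y j)) DB)"
        unfolding DA_def DB_def by (rule block[OF fin mF])
      also have "\<dots> \<le> (if j < k then 2 * (1/2)^k else 2 * (1/2)^j)" using bA bB by auto
      finally show ?thesis .
    qed
    have "norm (sum (s m) F) \<le> (\<Sum>j<b. norm (sum (s m) (F \<inter> E j)))"
      unfolding part[OF F] by (rule norm_sum)
    also have "\<dots> \<le> (\<Sum>j<b. if j < k then 2 * (1/2)^k else 2 * (1/2)^j)"
      by (intro sum_mono bj)
    also have "\<dots> \<le> real k * (2 * (1/2)^k) + 4 * (1/2)^k" by (rule bnd_gen) simp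
    also have "\<dots> = (2 * real k + 4) * (1/2)^k" by (simp add: algebra_simps)
    finally show ?thesis .
  qed
  have t2: "(\<lambda>k. (1/2::real)^k) \<longlonglongrightarrow> 0" by (rule LIMSEQ_power_zero) simp
  have summ: "summable (\<lambda>n. (A ^^ m) (w n))" for m
    unfolding summable_Cauchy
  proof (intro allI impI)
    fix e :: real assume e: "0 < e"
    have "\<forall>\<^sub>F k in sequentially. (1/2::real)^k < e/16"
      using order_tendstoD(2)[OF t2, of "e/16"] e by simp
    then obtain J0 where J0: "(1/2::real)^J0 < e/16" by (auto simp: eventually_sequentially)
    define J1 where "J1 = J0 + m"
    have J1: "(1/2::real)^J1 < e/16"
    proof -
      have "(1/2::real)^J1 \<le> (1/2)^J0" by (rule power_decreasing) (auto simp: J1_def)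
      thus ?thesis using J0 by linarith
    qed
    define e' where "e' = e / (4 * (real J1 + 1))"
    have e': "0 < e'" using e by (simp add: e'_def)
    have "\<forall>j. \<exists>R. \<forall>F. finite F \<longrightarrow> (\<forall>d\<in>F. R < d) \<longrightarrow>
        norm (sum (phA (Y j)) F) < e' \<and> norm (sum (phB (Y j)) F) < e'"
      using tails YX0 e' by blast
    then obtain Rt where Rt: "\<And>j F. finite F \<Longrightarrow> (\<forall>d\<in>F. Rt j < d) \<Longrightarrow> norm (sum (phB (Y j)) F) < e'"
      by metis
    define N0 where "N0 = m + 1 + (\<Sum>j<J1. Rt j)"
    show "\<exists>N. \<forall>a\<ge>N. \<forall>b. norm (sum (\<lambda>n. (A ^^ m) (w n)) {a..<b}) < e"
    proof (intro exI allI impI)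
      fix a b assume a: "N0 \<le> a"
      have F: "{a..<b} \<subseteq> {..<b}" by auto
      have mF: "m \<notin> {a..<b}" using a by (auto simp: N0_def)
      have bj: "norm (sum (s m) ({a..<b} \<inter> E j)) \<le> (if j < J1 then e' else 2 * (1/2)^j)" for j
      proof -
        define DB where "DB = (\<lambda>n. n - m) ` ({a..<b} \<inter> E j \<inter> {m<..})"
        have DA: "(\<lambda>n. m - n) ` ({a..<b} \<inter> E j \<inter> {..<m}) = {}" using a by (auto simp: N0_def)
        have finB: "finite DB" by (simp add: DB_def)
        have bB: "norm (sum (phB (Y j)) DB) \<le> (if j < J1 then e' else 2 * (1/2)^j)"
        proof (cases "j < J1")
          case True
          have "Rt j \<le> (\<Sum>j<J1. Rt j)" using True by (intro member_le_sum) auto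
          hence "\<forall>d\<in>DB. Rt j < d" using a by (auto simp: DB_def N0_def)
          thus ?thesis using Rt[OF finB] True by (simp add: less_imp_le)
        next
          case False
          have r: "Rf j j + j + 1 \<le> L j" using LRf by simp
          have "\<forall>d\<in>DB. Rf j j < d"
          proof
            fix d assume "d \<in> DB"
            then obtain n where n: "n \<in> E j" "d = n - m" unfolding DB_def by auto
            show "Rf j j < d" using E1[OF n(1)] r n(2) False by (simp add: J1_def)
          qed
          hence "norm (sum (phB (Y j)) DB) < (1/2)^j" using Rf[OF finB] by blast
          moreover have "(0::real) \<le> (1/2)^j" by simp
          ultimately show ?thesis using False by (simp, linarith)
        qed
        have "norm (sum (s m) ({a..<b} \<inter> E j)) \<le> norm (sum (phA (Y j)) {}) + norm (sum (phB (Y j)) DB)"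
          using block[OF _ mF, of j] unfolding DA DB_def by simp
        thus ?thesis using bB by simp
      qed
      have "norm (sum (\<lambda>n. (A ^^ m) (w n)) {a..<b}) = norm (sum (s m) {a..<b})" by (rule normeq)
      also have "\<dots> \<le> (\<Sum>j<b. norm (sum (s m) ({a..<b} \<inter> E j)))"
        unfolding part[OF F] by (rule norm_sum)
      also have "\<dots> \<le> (\<Sum>j<b. if j < J1 then e' else 2 * (1/2)^j)" by (intro sum_mono bj)
      also have "\<dots> \<le> real J1 * e' + 4 * (1/2)^J1" using e' by (intro bnd_gen) simp
      also have "\<dots> < e"
      proof -
        have "real J1 * e' \<le> e / 4" using e unfolding e'_def by (simp add: field_simps)
        thus ?thesis using J1 e by linarith
      qed
      finally show "norm (sum (\<lambda>n. (A ^^ m) (w n)) {a..<b}) < e" .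
    qed
  qed
  define x where "x = suminf w"
  define z where "z m = suminf (\<lambda>n. (A ^^ m) (w n))" for m
  have wsum: "(\<lambda>N. \<Sum>n<N. w n) \<longlonglongrightarrow> x"
    using summable_LIMSEQ[OF summ[of 0]] by (simp add: x_def)
  have tsum: "(\<lambda>N. \<Sum>n<N. (A ^^ m) (w n)) \<longlonglongrightarrow> z m" for m
    using summable_LIMSEQ[OF summ[of m]] by (simp add: z_def)
  have xdom: "x \<in> pow_dom D A m \<and> (A ^^ m) x = z m" for m
  proof (cases "m = 0")
    case True
    thus ?thesis by (simp add: z_def x_def)
  next
    case False
    let ?G = "{(x, (A ^^ m) x) | x. x \<in> pow_dom D A m}"
    have cl: "closed ?G" using closed_powers False unfolding closed_pow_def by auto
    have mem: "((\<Sum>n<N. w n), (\<Sum>n<N. (A ^^ m) (w n))) \<in> ?G" for N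
      using pd_sum[OF op, of "{..<N}" w m] wdom by auto
    have lim: "(\<lambda>N. ((\<Sum>n<N. w n), (\<Sum>n<N. (A ^^ m) (w n)))) \<longlonglongrightarrow> (x, z m)"
      using wsum tsum by (rule tendsto_Pair)
    have "(x, z m) \<in> ?G" by (rule closed_sequentially[OF cl _ lim]) (rule mem)
    thus ?thesis by auto
  qed
  have hyp: "norm (((\<lambda>x. smul lam (A x)) ^^ m) x - Y k) \<le> (2 * real k + 4) * (1/2)^k"
    if mk: "m \<in> E k" for m k
  proof -
    have Tx: "((\<lambda>x. smul lam (A x)) ^^ m) x = smul (lam^m) (z m)"
      using Tpow[OF s op lam(1)] xdom by simp
    have lim: "(\<lambda>N. smul (lam^m) (\<Sum>n<N. (A ^^ m) (w n)) - Y k) \<longlonglongrightarrow> smul (lam^m) (z m) - Y k"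
      by (intro tendsto_diff tendsto_const bounded_linear.tendsto[OF ss_blin[OF s lamp] tsum])
    have ev: "\<forall>\<^sub>F N in sequentially. norm (smul (lam^m) (\<Sum>n<N. (A ^^ m) (w n)) - Y k) \<le> (2 * real k + 4) * (1/2)^k"
      using eventually_gt_at_top[of m]
    proof eventually_elim
      fix N assume N: "m < N"
      have "smul (lam^m) (\<Sum>n<N. (A ^^ m) (w n)) = sum (s m) {..<N}"
        using ss_sum[OF s lamp, of m "\<lambda>n. (A^^m) (w n)" "{..<N}"] by (simp add: s_def)
      also have "\<dots> = s m m + sum (s m) ({..<N} - {m})" using N by (subst sum.remove) auto
      also have "s m m = Y k" using sE[OF mk, of m] by simp
      finally have "smul (lam^m) (\<Sum>n<N. (A ^^ m) (w n)) - Y k = sum (s m) ({..<N} - {m})" by simp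
      thus "norm (smul (lam^m) (\<Sum>n<N. (A ^^ m) (w n)) - Y k) \<le> (2 * real k + 4) * (1/2)^k"
        using errbound[OF mk, of "{..<N} - {m}" N] by auto
    qed
    show ?thesis using Lim_norm_ubound[OF trivial_limit_sequentially lim ev] Tx by simp
  qed
  have delta: "(\<lambda>k. (2 * real k + 4) * (1/2::real)^k) \<longlonglongrightarrow> 0"
  proof -
    have t1: "(\<lambda>k. real k * (1/2::real)^k) \<longlonglongrightarrow> 0"
      using powser_times_n_limit_0[of "1/2::real"] by simp
    have "(\<lambda>k. 2 * (real k * (1/2::real)^k) + 4 * (1/2)^k) \<longlonglongrightarrow> 2 * 0 + 4 * 0"
      by (intro tendsto_intros t1 t2)
    thus ?thesis by (simp add: algebra_simps)
  qed
  show ?thesis unfolding freq_hypercyclic_def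
  proof (intro exI[of _ x] conjI allI impI)
    show "x \<in> D" using xdom[of 1] by (simp add: pow_dom_def)
  next
    fix n :: nat assume "1 \<le> n"
    have xn: "x \<in> pow_dom D A (Suc n)" using xdom by blast
    hence "(A ^^ n) x \<in> D" by (simp add: pow_dom_Suc)
    hence "smul (lam^n) ((A ^^ n) x) \<in> D" using op lamp by (auto simp: linear_operator_def)
    thus "((\<lambda>x. smul lam (A x)) ^^ n) x \<in> D"
      using Tpow[OF s op lam(1) pow_dom_mono[OF _ xn, of n]] by simp
  next
    fix U :: "'a set" assume U: "open U \<and> U \<noteq> {}"
    then obtain u where u: "u \<in> U" by blast
    then obtain \<epsilon> where eps: "\<epsilon> > 0" "ball u \<epsilon> \<subseteq> U" using U open_contains_ball by blast
    have "\<forall>\<^sub>F k in sequentially. (2 * real k + 4) * (1/2::real)^k < \<epsilon>/2"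
      using order_tendstoD(2)[OF delta, of "\<epsilon>/2"] eps by simp
    then obtain K0 where K0: "\<And>k. k \<ge> K0 \<Longrightarrow> (2 * real k + 4) * (1/2::real)^k < \<epsilon>/2"
      by (auto simp: eventually_sequentially)
    obtain k where k: "k \<ge> K0" "dist (Y k) u < \<epsilon>/2" using Yd[of "\<epsilon>/2" K0 u] eps by auto
    have sub: "E k \<subseteq> {n. ((\<lambda>x. smul lam (A x)) ^^ n) x \<in> U}"
    proof
      fix m assume m: "m \<in> E k"
      have "dist (((\<lambda>x. smul lam (A x)) ^^ m) x) u \<le> dist (((\<lambda>x. smul lam (A x)) ^^ m) x) (Y k) + dist (Y k) u"
        by (rule dist_triangle)
      also have "\<dots> < \<epsilon>/2 + \<epsilon>/2"
        using hyp[OF m] K0[OF k(1)] k(2) by (intro add_le_less_mono) (auto simp: dist_norm)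
      finally have "((\<lambda>x. smul lam (A x)) ^^ m) x \<in> ball u \<epsilon>" by (simp add: dist_commute)
      thus "m \<in> {n. ((\<lambda>x. smul lam (A x)) ^^ n) x \<in> U}" using eps by auto
    qed
    obtain c where c: "c > 0" "\<forall>\<^sub>F N in sequentially. c * real N \<le> real (card (E k \<inter> {1..N}))"
      using E4 by blast
    show "lower_density {n. ((\<lambda>x. smul lam (A x)) ^^ n) x \<in> U} > 0"
    proof (rule lower_density_pos[OF c(1)])
      show "\<forall>\<^sub>F N in sequentially. c * real N \<le> real (card ({n. ((\<lambda>x. smul lam (A x)) ^^ n) x \<in> U} \<inter> {1..N}))"
        using c(2)
      proof eventually_elim
        fix N assume "c * real N \<le> real (card (E k \<inter> {1..N}))"
        moreover have "card (E k \<inter> {1..N}) \<le> card ({n. ((\<lambda>x. smul lam (A x)) ^^ n) x \<in> U} \<inter> {1..N})"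
          using sub by (intro card_mono) auto
        ultimately show "c * real N \<le> real (card ({n. ((\<lambda>x. smul lam (A x)) ^^ n) x \<in> U} \<inter> {1..N}))"
          by linarith
      qed
    qed
  qed
qed


end
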